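(* Fix $k\ge2$, $c>0$ and $\zeta_n\in(0,1]$ with $\limsup_{n\to\infty}\zeta_n(k-1)c^{k-1}<e$. For any sequence $G_n=(V_n,E_n)$ of asymptotically tree-like $k$-uniform hypergraphs, for all sufficiently large $n$ there is a unique $\mathbf x^\ast\in[0,c]^{V_n}$ with $F^{G_n}_{c,\zeta_n}(\mathbf x^\ast)=\mathbf x^\ast$.
   Context: Hypergraphs are simple. For a hypergraph $G$ and $S\subseteq V(G)$, $d_G(S)=|\{e\in E(G):S\subseteq e\}|$, $\Delta_\ell(G)=\max_{|S|=\ell}d_G(S)$, $\Delta(G)=\Delta_1(G)$ the maximum degree, and $\Gamma(G)$ is the maximum over distinct $v,v'$ of the number of $(k-1)$-sets $S$ with $S\cup\{v\},S\cup\{v'\}\in E(G)$. A sequence $(G_n)$ of $k$-uniform hypergraphs is asymptotically tree-like if, with $G=G_n$, $\Delta=\Delta(G)$, as $n\to\infty$: (1) $\Delta\to\infty$; (2) $\Delta_\ell(G)=o(\Delta^{\frac{k-\ell}{k-1}})$ for each $\ell\in\{2,\dots,k-1\}$; (3) $\Gamma(G)=o(\Delta)$; (4) $|E(G)|/|V(G)|=\Omega(\Delta)$. For a $k$-uniform hypergraph $G=(V,E)$ with maximum degree $\Delta$, the map $F^G_{c,\zeta}:[0,c]^V\to[0,c]^V$ is $(F^G_{c,\zeta}(\mathbf x))_v=c\exp\left(-\frac{\zeta}{\Delta}\sum_{e\ni v}\prod_{u\in e\setminus\{v\}}x_u\right)$. *)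

theory Defs
  imports "HOL-Analysis.Analysis" "HOL-Library.Landau_Symbols"
begin

definition uniform_hypergraph :: "nat \<Rightarrow> 'a set \<Rightarrow> 'a set set \<Rightarrow> bool" where
  "uniform_hypergraph k V E \<longleftrightarrow> finite V \<and> (\<forall>e\<in>E. e \<subseteq> V \<and> card e = k)"

definition hdeg :: "'a set set \<Rightarrow> 'a set \<Rightarrow> nat" where
  "hdeg E S = card {e\<in>E. S \<subseteq> e}"

definition Delta_l :: "'a set \<Rightarrow> 'a set set \<Rightarrow> nat \<Rightarrow> nat" where
  "Delta_l V E l = Max (insert 0 {hdeg E S | S. S \<subseteq> V \<and> card S = l})"

definition max_degree :: "'a set \<Rightarrow> 'a set set \<Rightarrow> nat" where
  "max_degree V E = Delta_l V E 1"

definition Gamma_codeg :: "nat \<Rightarrow> 'a set \<Rightarrow> 'a set set \<Rightarrow> nat" where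
  "Gamma_codeg k V E = Max (insert 0
     {card {S. card S = k - 1 \<and> S \<union> {v} \<in> E \<and> S \<union> {v'} \<in> E} | v v'.
        v \<in> V \<and> v' \<in> V \<and> v \<noteq> v'})"

definition asymp_tree_like :: "nat \<Rightarrow> (nat \<Rightarrow> 'a set) \<Rightarrow> (nat \<Rightarrow> 'a set set) \<Rightarrow> bool" where
  "asymp_tree_like k V E \<longleftrightarrow>
     (\<forall>n. uniform_hypergraph k (V n) (E n)) \<and>
     filterlim (\<lambda>n. real (max_degree (V n) (E n))) at_top sequentially \<and>
     (\<forall>l\<in>{2..k-1}. (\<lambda>n. real (Delta_l (V n) (E n) l)) \<in>
        o[sequentially](\<lambda>n. real (max_degree (V n) (E n)) powr ((real k - real l) / (real k - 1)))) \<and>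
     (\<lambda>n. real (Gamma_codeg k (V n) (E n))) \<in> o[sequentially](\<lambda>n. real (max_degree (V n) (E n))) \<and>
     (\<lambda>n. real (card (E n)) / real (card (V n))) \<in> \<Omega>[sequentially](\<lambda>n. real (max_degree (V n) (E n)))"

text \<open>The map F^G_{c,zeta}, restricted to V (elements of [0,c]^V are represented
  as extensional functions on V).\<close>
definition Fmap :: "'a set \<Rightarrow> 'a set set \<Rightarrow> real \<Rightarrow> real \<Rightarrow> ('a \<Rightarrow> real) \<Rightarrow> ('a \<Rightarrow> real)" where
  "Fmap V E c \<zeta> x = restrict (\<lambda>v. c * exp (- (\<zeta> / real (max_degree V E)) *
       (\<Sum>e\<in>{e\<in>E. v \<in> e}. \<Prod>u\<in>e - {v}. x u))) V"

end

theory Submission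
  imports Defs
begin

lemma lemC:
  fixes b d :: real assumes "b \<ge> 1" "d \<ge> 0"
  shows "b * (exp d - 1) \<le> exp (b * d) - 1"
proof -
  let ?g = "\<lambda>t. exp (b * t) - 1 - b * (exp t - 1)"
  have "?g 0 \<le> ?g d"
  proof (rule DERIV_nonneg_imp_nondecreasing[OF assms(2)])
    fix t :: real assume t: "0 \<le> t" "t \<le> d"
    have "DERIV ?g t :> b * exp (b*t) - b * exp t"
      by (auto intro!: derivative_eq_intros)
    moreover have "b * exp (b*t) - b * exp t \<ge> 0"
    proof -
      have "b*t \<ge> t" using mult_right_mono[of 1 b t] assms t by simp
      hence "exp t \<le> exp (b*t)" by simp
      thus ?thesis using assms by (simp add: algebra_simps mult_left_mono)
    qed
    ultimately show "\<exists>y. DERIV ?g t :> y \<and> y \<ge> 0" by blast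
  qed
  thus ?thesis by simp
qed

lemma lemSinh:
  fixes t :: real assumes "t \<ge> 0"
  shows "2 * t \<le> exp t - exp (- t)"
proof -
  let ?g = "\<lambda>t. exp t - exp (-t) - 2 * t"
  have "?g 0 \<le> ?g t"
  proof (rule DERIV_nonneg_imp_nondecreasing[OF assms])
    fix u :: real assume u: "0 \<le> u" "u \<le> t"
    have "DERIV ?g u :> exp u + exp (-u) - 2"
      by (auto intro!: derivative_eq_intros)
    moreover have "exp u + exp (-u) - 2 \<ge> 0"
      using exp_ge_add_one_self[of u] exp_ge_add_one_self[of "-u"] by linarith
    ultimately show "\<exists>y. DERIV ?g u :> y \<and> y \<ge> 0" by blast
  qed
  thus ?thesis by simp
qed

lemma lemD:
  fixes S :: real assumes "S \<ge> 0"
  shows "S^2 * exp S \<le> (exp S - 1)^2"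
proof -
  have "2*(S/2) \<le> exp (S/2) - exp (-(S/2))" using lemSinh[of "S/2"] assms by simp
  hence h: "S \<le> exp (S/2) - exp (-(S/2))" by simp
  have "S * exp (S/2) \<le> (exp (S/2) - exp (-(S/2))) * exp (S/2)"
    using h by (simp add: mult_right_mono)
  also have "\<dots> = exp S - 1"
    by (simp add: algebra_simps flip: exp_add)
  finally have "S * exp (S/2) \<le> exp S - 1" .
  hence "(S * exp (S/2))^2 \<le> (exp S - 1)^2"
    using assms by (intro power_mono) auto
  moreover have "(S * exp (S/2))^2 = S^2 * exp S"
    by (simp add: power_mult_distrib power2_eq_square flip: exp_add)
  ultimately show ?thesis by simp
qed

lemma lim0: "((\<lambda>S::real. ln S - ln (exp S - 1) + S / (exp S - 1) + S - 1) \<longlongrightarrow> 0) (at_right 0)"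
proof -
  define q where "q = (\<lambda>S::real. (exp S - 1) / S)"
  have q1: "(q \<longlongrightarrow> 1) (at_right 0)"
    unfolding q_def by (rule tendsto_mono[OF at_le lim_exp_minus_1]) simp
  have "((\<lambda>S. - ln (q S) + 1 / q S + S - 1) \<longlongrightarrow> - ln 1 + 1 / 1 + 0 - 1) (at_right 0)"
    by (intro tendsto_intros q1) auto
  hence lim: "((\<lambda>S. - ln (q S) + 1 / q S + S - 1) \<longlongrightarrow> 0) (at_right 0)" by simp
  have ev: "eventually (\<lambda>S. - ln (q S) + 1 / q S + S - 1 = ln S - ln (exp S - 1) + S / (exp S - 1) + S - 1) (at_right (0::real))"
  proof -
    have "- ln (q S) + 1 / q S + S - 1 = ln S - ln (exp S - 1) + S / (exp S - 1) + S - 1" if S: "S > 0" for S :: real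
    proof -
      have u: "exp S - 1 > 0" using S by simp
      show ?thesis unfolding q_def using S u by (simp add: ln_div)
    qed
    thus ?thesis by (auto simp: eventually_at_right_less intro!: eventually_mono[OF eventually_at_right_less])
  qed
  show ?thesis using tendsto_cong[OF ev] lim by blast
qed

lemma lemF:
  fixes S :: real assumes S: "S > 0"
  shows "0 \<le> ln S - ln (exp S - 1) + S / (exp S - 1) + S - 1"
proof -
  define f where "f = (\<lambda>S::real. ln S - ln (exp S - 1) + S / (exp S - 1) + S - 1)"
  have mono: "f e \<le> f S" if e: "0 < e" "e < S" for e
  proof (rule DERIV_nonneg_imp_nondecreasing[of e S f])
    show "e \<le> S" using e by simp
    fix x :: real assume x: "e \<le> x" "x \<le> S"
    hence xp: "x > 0" using e by simp
    hence u: "exp x - 1 > 0" by simp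
    have "DERIV f x :> 1/x - exp x/(exp x - 1) + ((exp x - 1) - x * exp x)/(exp x - 1)^2 + 1"
      unfolding f_def using xp u
      by (auto intro!: derivative_eq_intros simp: field_simps power2_eq_square)
    moreover have "1/x - exp x/(exp x - 1) + ((exp x - 1) - x * exp x)/(exp x - 1)^2 + 1
        = 1/x - x * exp x / (exp x - 1)^2"
    proof -
      define v where "v = exp x - 1"
      have ex: "exp x = v + 1" unfolding v_def by simp
      have v0: "v > 0" using u v_def by simp
      have "1/x - (v+1)/v + (v - x * (v+1))/v^2 + 1 = 1/x - x * (v+1) / v^2"
        using v0 xp by (simp add: field_simps power2_eq_square)
      thus ?thesis unfolding ex by simp
    qed
    moreover have "1/x - x * exp x / (exp x - 1)^2 \<ge> 0"
    proof -
      have "x^2 * exp x \<le> (exp x - 1)^2" using lemD[of x] xp by simp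
      have p: "(exp x - 1)^2 > 0" using u by simp
      have "x * exp x \<le> (exp x - 1)^2 / x"
        unfolding pos_le_divide_eq[OF xp] using \<open>x^2 * exp x \<le> (exp x - 1)^2\<close>
        by (simp add: power2_eq_square algebra_simps)
      hence "x * exp x / (exp x - 1)^2 \<le> 1/x"
        by (simp add: pos_divide_le_eq[OF p])
      thus ?thesis by simp
    qed
    ultimately show "\<exists>y. DERIV f x :> y \<and> y \<ge> 0" by auto
  qed
  have ev: "eventually (\<lambda>e. f e \<le> f S) (at_right 0)"
    unfolding eventually_at_right[OF S] using mono S by (intro exI[of _ S]) auto
  have "0 \<le> f S"
    using tendsto_upperbound[OF lim0[folded f_def] ev] by simp
  thus ?thesis unfolding f_def .
qed

lemma lemB:
  fixes S :: real assumes S: "S > 0"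
  shows "exp 1 * (exp (- (S / (exp S - 1))) * (1 - exp (- S))) \<le> S"
proof -
  have u: "exp S - 1 > 0" using S by simp
  have "1 - exp (-S) = (exp S - 1) * exp (-S)"
    by (simp add: algebra_simps flip: exp_add)
  also have "\<dots> = exp (ln (exp S - 1) - S)" using u by (simp add: exp_diff exp_minus field_simps)
  finally have h: "1 - exp (-S) = exp (ln (exp S - 1) - S)" .
  have "exp 1 * (exp (- (S / (exp S - 1))) * (1 - exp (- S)))
      = exp (1 - S / (exp S - 1) + ln (exp S - 1) - S)"
    unfolding h by (simp flip: exp_add)
  also have "\<dots> \<le> exp (ln S)"
    using lemF[OF S] by simp
  also have "\<dots> = S" using S by simp
  finally show ?thesis .
qed

lemma lemA:
  fixes S T \<sigma> :: real
  assumes S: "S > 0" and T: "T \<ge> 0" and s1: "\<sigma> \<le> S" and s2: "\<sigma> \<le> (exp S - 1) * T"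
  shows "exp (- T) * (1 - exp (- \<sigma>)) \<le> exp (- (S / (exp S - 1))) * (1 - exp (- S))"
proof -
  define s where "s = S / (exp S - 1)"
  have u: "exp S - 1 > 0" using S by simp
  have s0: "s > 0" unfolding s_def using S u by simp
  have rhs0: "0 \<le> exp (- s) * (1 - exp (- S))" using S by simp
  show ?thesis
  proof (cases "\<sigma> \<le> 0")
    case True
    hence "1 - exp (- \<sigma>) \<le> 0" by simp
    hence "exp (- T) * (1 - exp (- \<sigma>)) \<le> 0" by (simp add: mult_nonneg_nonpos)
    thus ?thesis using rhs0 unfolding s_def by linarith
  next
    case False
    hence sp: "\<sigma> > 0" by simp
    show ?thesis
    proof (cases "T \<ge> s")
      case True
      have "exp (- T) * (1 - exp (- \<sigma>)) \<le> exp (- s) * (1 - exp (- S))"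
        apply (rule mult_mono) using True s1 sp by auto
      thus ?thesis unfolding s_def .
    next
      case False
      define b where "b = exp S"
      define d where "d = s - T"
      have d0: "d \<ge> 0" using False d_def by simp
      have b1: "b \<ge> 1" using S b_def by simp
      have bs: "b * s = S + s" unfolding b_def s_def using u by (simp add: field_simps)
      have e3: "exp (- (b * s)) = exp (- s) * exp (- S) " using bs by (simp flip: exp_add)
      have "1 - exp (- \<sigma>) \<le> 1 - exp (- ((b - 1) * T))"
        using s2 unfolding b_def by simp
      hence "exp (- T) * (1 - exp (- \<sigma>)) \<le> exp (- T) * (1 - exp (- ((b - 1) * T)))"
        by (simp add: mult_left_mono)
      also have "\<dots> = exp (- T) - exp (- (b * T))"
        by (simp add: algebra_simps flip: exp_add)
      also have "\<dots> \<le> exp (- s) - exp (- (b * s))"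
      proof -
        have C: "b * (exp d - 1) \<le> exp (b * d) - 1" using lemC[OF b1 d0] .
        have e1: "exp (- T) = exp (- s) * exp d" unfolding d_def by (simp flip: exp_add)
        have e2: "exp (- (b * T)) = exp (- (b * s)) * exp (b * d)"
          unfolding d_def by (simp add: algebra_simps flip: exp_add)
        have "exp (- s) * (exp d - 1) \<le> exp (- (b * s)) * (exp (b * d) - 1)"
        proof -
          have "exp (- (b * s)) * (b * (exp d - 1)) = exp (- s) * (exp (- S) * exp S) * (exp d - 1)"
            unfolding e3 by (simp add: b_def ac_simps)
          also have "\<dots> = exp (- s) * (exp d - 1)" by (simp add: exp_minus)
          finally have "exp (- s) * (exp d - 1) = exp (- (b * s)) * (b * (exp d - 1))" by (rule sym)
          also have "\<dots> \<le> exp (- (b * s)) * (exp (b * d) - 1)"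
            using C by (simp add: mult_left_mono)
          finally show ?thesis .
        qed
        thus ?thesis unfolding e1 e2 by (simp add: algebra_simps)
      qed
      also have "\<dots> = exp (- s) * (1 - exp (- S))"
        unfolding e3 by (simp add: algebra_simps)
      finally show ?thesis unfolding s_def .
    qed
  qed
qed

locale hg =
  fixes V :: "'a set" and E :: "'a set set" and k :: nat and c w \<gamma> :: real
  assumes finV: "finite V" and Esub: "\<And>e. e \<in> E \<Longrightarrow> e \<subseteq> V"
    and Ecard: "\<And>e. e \<in> E \<Longrightarrow> card e = k"
    and k2: "k \<ge> 2" and cpos: "c > 0" and w0: "w \<ge> 0"
    and deg: "\<And>v. v \<in> V \<Longrightarrow> w * real (card {e\<in>E. v \<in> e}) * (real k - 1) * c ^ (k - 1) \<le> \<gamma>"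
    and gam: "\<gamma> < exp 1"
begin

definition Ev where "Ev v = {e\<in>E. v \<in> e}"
definition A :: "('a \<Rightarrow> real) \<Rightarrow> 'a \<Rightarrow> real" where
  "A x v = w * (\<Sum>e\<in>Ev v. \<Prod>u\<in>e - {v}. x u)"
definition F :: "('a \<Rightarrow> real) \<Rightarrow> 'a \<Rightarrow> real" where
  "F x = restrict (\<lambda>v. c * exp (- A x v)) V"

lemma finE: "finite E"
proof -
  have "E \<subseteq> Pow V" using Esub by auto
  thus ?thesis using finV finite_subset by blast
qed

lemma finEv: "finite (Ev v)" unfolding Ev_def using finE by simp

lemma fin_edge: "e \<in> E \<Longrightarrow> finite e" using Esub finV finite_subset by blast

lemma card_edge: "e \<in> E \<Longrightarrow> u \<in> e \<Longrightarrow> card (e - {u}) = k - 1"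
  using Ecard fin_edge by (simp add: card_Diff_singleton)

lemma A_nonneg: assumes "\<And>u. u \<in> V \<Longrightarrow> x u \<ge> 0" shows "A x v \<ge> 0"
  unfolding A_def using w0 assms Esub
  by (intro mult_nonneg_nonneg sum_nonneg prod_nonneg) (auto simp: Ev_def)

lemma F_pos: "v \<in> V \<Longrightarrow> F x v > 0" unfolding F_def using cpos by simp

lemma F_le: assumes "\<And>u. u \<in> V \<Longrightarrow> x u \<ge> 0" shows "v \<in> V \<Longrightarrow> F x v \<le> c"
  unfolding F_def using cpos A_nonneg[OF assms] by simp

lemma F_anti: assumes "\<And>u. u \<in> V \<Longrightarrow> 0 \<le> x u" "\<And>u. u \<in> V \<Longrightarrow> x u \<le> y u"
  shows "v \<in> V \<Longrightarrow> F y v \<le> F x v"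
proof -
  assume v: "v \<in> V"
  have "A x v \<le> A y v" unfolding A_def
    using assms Esub w0
    by (intro mult_left_mono sum_mono prod_mono) (auto simp: Ev_def)
  thus ?thesis unfolding F_def using v cpos by simp
qed

lemma core:
  assumes xp: "\<And>u. u \<in> V \<Longrightarrow> x u > 0" and yp: "\<And>u. u \<in> V \<Longrightarrow> y u > 0"
    and yx: "\<And>u. u \<in> V \<Longrightarrow> y u = c * exp (- A x u)"
    and xy: "\<And>u. u \<in> V \<Longrightarrow> x u = c * exp (- A y u)"
    and Rb: "\<And>u. u \<in> V \<Longrightarrow> \<bar>ln (y u) - ln (x u)\<bar> \<le> R"
    and v: "v \<in> V" and Rv: "ln (y v) - ln (x v) = R" and R0: "R > 0"
  shows False
proof -
  define \<rho> where "\<rho> u = ln (y u) - ln (x u)" for u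
  define S where "S = (real k - 1) * R"
  have k1: "real k - 1 \<ge> 1" using k2 by simp
  have rk: "real (k - 1) = real k - 1" using k2 by (simp add: of_nat_diff)
  have S0: "S > 0" unfolding S_def using k1 R0 by simp
  have rhoA: "\<rho> u = A y u - A x u" if u: "u \<in> V" for u
  proof -
    have "ln (y u) = ln c - A x u" using yx[OF u] cpos by (simp add: ln_mult)
    moreover have "ln (x u) = ln c - A y u" using xy[OF u] cpos by (simp add: ln_mult)
    ultimately show ?thesis unfolding \<rho>_def by simp
  qed
  have yrat: "y u = x u * exp (\<rho> u)" if u: "u \<in> V" for u
    unfolding \<rho>_def using xp[OF u] yp[OF u] by (simp add: exp_diff)
  have sumle: "(\<Sum>t\<in>e-{u}. \<rho> t) \<le> S" if e: "e \<in> E" "u \<in> e" for e u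
  proof -
    have "(\<Sum>t\<in>e-{u}. \<rho> t) \<le> (\<Sum>t\<in>e-{u}. R)"
      apply (rule sum_mono) using Rb Esub[OF e(1)] unfolding \<rho>_def by fastforce
    also have "\<dots> = real (k - 1) * R" using card_edge[OF e] by simp
    finally show ?thesis unfolding S_def rk .
  qed
  have prodrat: "(\<Prod>t\<in>e-{u}. y t) = (\<Prod>t\<in>e-{u}. x t) * exp (\<Sum>t\<in>e-{u}. \<rho> t)"
    if e: "e \<in> E" "u \<in> e" for e u
  proof -
    have "(\<Prod>t\<in>e-{u}. y t) = (\<Prod>t\<in>e-{u}. x t * exp (\<rho> t))"
      apply (rule prod.cong) using yrat Esub[OF e(1)] by auto
    also have "\<dots> = (\<Prod>t\<in>e-{u}. x t) * exp (\<Sum>t\<in>e-{u}. \<rho> t)"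
      using fin_edge[OF e(1)] by (simp add: prod.distrib exp_sum)
    finally show ?thesis .
  qed
  have xnn: "\<And>u. u \<in> V \<Longrightarrow> x u \<ge> 0" using xp by (simp add: less_imp_le)
  have Ax0: "\<And>u. A x u \<ge> 0" using A_nonneg[OF xnn] .
  have rhole: "\<rho> u \<le> (exp S - 1) * A x u" if u: "u \<in> V" for u
  proof -
    have "\<rho> u = w * (\<Sum>e\<in>Ev u. (\<Prod>t\<in>e-{u}. y t) - (\<Prod>t\<in>e-{u}. x t))"
      unfolding rhoA[OF u] A_def by (simp add: sum_subtractf right_diff_distrib)
    also have "\<dots> \<le> w * (\<Sum>e\<in>Ev u. (exp S - 1) * (\<Prod>t\<in>e-{u}. x t))"
    proof (intro mult_left_mono sum_mono w0)
      fix e assume e: "e \<in> Ev u"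
      hence eE: "e \<in> E" "u \<in> e" unfolding Ev_def by auto
      have px: "(\<Prod>t\<in>e-{u}. x t) \<ge> 0" using xnn Esub[OF eE(1)] by (intro prod_nonneg) auto
      have "exp (\<Sum>t\<in>e-{u}. \<rho> t) \<le> exp S" using sumle[OF eE] by simp
      hence "(\<Prod>t\<in>e-{u}. x t) * exp (\<Sum>t\<in>e-{u}. \<rho> t) \<le> (\<Prod>t\<in>e-{u}. x t) * exp S"
        using px by (simp add: mult_left_mono)
      thus "(\<Prod>t\<in>e-{u}. y t) - (\<Prod>t\<in>e-{u}. x t) \<le> (exp S - 1) * (\<Prod>t\<in>e-{u}. x t)"
        unfolding prodrat[OF eE] by (simp add: algebra_simps)
    qed
    also have "\<dots> = (exp S - 1) * A x u" unfolding A_def by (simp add: sum_distrib_left mult.left_commute)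
    finally show ?thesis .
  qed
  define K where "K = exp (- (S / (exp S - 1))) * (1 - exp (- S))"
  have K0: "K > 0" unfolding K_def using S0 by simp
  have edge: "(\<Prod>t\<in>e-{v}. y t) - (\<Prod>t\<in>e-{v}. x t) \<le> c ^ (k - 1) * K" if e: "e \<in> Ev v" for e
  proof -
    have eE: "e \<in> E" "v \<in> e" using e unfolding Ev_def by auto
    have fe: "finite (e - {v})" using fin_edge[OF eE(1)] by simp
    define T where "T = (\<Sum>t\<in>e-{v}. A x t)"
    define \<sigma> where "\<sigma> = (\<Sum>t\<in>e-{v}. \<rho> t)"
    have py: "(\<Prod>t\<in>e-{v}. y t) = c ^ (k - 1) * exp (- T)"
    proof -
      have "(\<Prod>t\<in>e-{v}. y t) = (\<Prod>t\<in>e-{v}. c * exp (- A x t))"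
        apply (rule prod.cong) using yx Esub[OF eE(1)] by auto
      also have "\<dots> = c ^ (k - 1) * exp (- T)"
      proof -
        have "exp (- T) = (\<Prod>t\<in>e-{v}. exp (- A x t))"
          unfolding T_def using fe by (simp add: exp_sum flip: sum_negf)
        thus ?thesis using fe card_edge[OF eE] by (simp add: prod.distrib)
      qed
      finally show ?thesis .
    qed
    have pxy: "(\<Prod>t\<in>e-{v}. x t) = (\<Prod>t\<in>e-{v}. y t) * exp (- \<sigma>)"
      unfolding prodrat[OF eE] \<sigma>_def by (simp add: exp_minus_inverse)
    have T0: "T \<ge> 0" unfolding T_def using Ax0 by (simp add: sum_nonneg)
    have s1: "\<sigma> \<le> S" unfolding \<sigma>_def using sumle[OF eE] .
    have s2: "\<sigma> \<le> (exp S - 1) * T"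
    proof -
      have "\<sigma> \<le> (\<Sum>t\<in>e-{v}. (exp S - 1) * A x t)"
        unfolding \<sigma>_def apply (rule sum_mono) using rhole Esub[OF eE(1)] by auto
      thus ?thesis unfolding T_def by (simp add: sum_distrib_left)
    qed
    have "(\<Prod>t\<in>e-{v}. y t) - (\<Prod>t\<in>e-{v}. x t) = c ^ (k - 1) * (exp (- T) * (1 - exp (- \<sigma>)))"
      unfolding pxy py by (simp add: algebra_simps)
    also have "\<dots> \<le> c ^ (k - 1) * K"
      unfolding K_def using lemA[OF S0 T0 s1 s2] cpos by (simp add: mult_left_mono)
    finally show ?thesis .
  qed
  have "R = w * (\<Sum>e\<in>Ev v. (\<Prod>t\<in>e-{v}. y t) - (\<Prod>t\<in>e-{v}. x t))"
    using rhoA[OF v] Rv unfolding \<rho>_def A_def by (simp add: sum_subtractf right_diff_distrib)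
  also have "\<dots> \<le> w * (\<Sum>e\<in>Ev v. c ^ (k - 1) * K)"
    by (intro mult_left_mono sum_mono w0 edge)
  also have "\<dots> = w * real (card {e\<in>E. v \<in> e}) * c ^ (k - 1) * K"
    unfolding Ev_def by simp
  finally have "S \<le> (real k - 1) * (w * real (card {e\<in>E. v \<in> e}) * c ^ (k - 1) * K)"
    unfolding S_def using k1 by (simp add: mult_left_mono)
  also have "\<dots> = (w * real (card {e\<in>E. v \<in> e}) * (real k - 1) * c ^ (k - 1)) * K"
    by (simp add: algebra_simps)
  also have "\<dots> \<le> \<gamma> * K" using deg[OF v] K0 by (simp add: mult_right_mono)
  also have "\<dots> < exp 1 * K" using gam K0 by simp
  also have "\<dots> \<le> S" unfolding K_def using lemB[OF S0] .
  finally show False by simp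
qed


lemma F_ext: "v \<notin> V \<Longrightarrow> F x v = undefined" unfolding F_def by simp

lemma F_eq: "v \<in> V \<Longrightarrow> F x v = c * exp (- A x v)" unfolding F_def by simp

lemma cycle:
  assumes xy: "F x = y" and yx: "F y = x"
  shows "x = y"
proof (rule ccontr)
  assume ne: "x \<noteq> y"
  have xp: "\<And>u. u \<in> V \<Longrightarrow> x u > 0" using F_pos yx by metis
  have yp: "\<And>u. u \<in> V \<Longrightarrow> y u > 0" using F_pos xy by metis
  have yxe: "\<And>u. u \<in> V \<Longrightarrow> y u = c * exp (- A x u)" using F_eq xy by metis
  have xye: "\<And>u. u \<in> V \<Longrightarrow> x u = c * exp (- A y u)" using F_eq yx by metis
  obtain v0 where v0: "v0 \<in> V" "x v0 \<noteq> y v0"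
  proof -
    have "\<exists>v. x v \<noteq> y v" using ne by auto
    then obtain v where "x v \<noteq> y v" by blast
    moreover have "v \<in> V" using F_ext xy yx \<open>x v \<noteq> y v\<close> by metis
    ultimately show ?thesis using that by blast
  qed
  define R where "R = Max ((\<lambda>u. \<bar>ln (y u) - ln (x u)\<bar>) ` V)"
  have Rb: "\<And>u. u \<in> V \<Longrightarrow> \<bar>ln (y u) - ln (x u)\<bar> \<le> R"
    unfolding R_def using finV by (intro Max_ge) auto
  obtain v where v: "v \<in> V" "\<bar>ln (y v) - ln (x v)\<bar> = R"
  proof -
    have "R \<in> (\<lambda>u. \<bar>ln (y u) - ln (x u)\<bar>) ` V" unfolding R_def using finV v0 by (intro Max_in) auto
    thus ?thesis using that by blast
  qed
  have "ln (y v0) \<noteq> ln (x v0)" using v0 xp yp by simp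
  hence "0 < \<bar>ln (y v0) - ln (x v0)\<bar>" by simp
  hence R0: "R > 0" using Rb[OF v0(1)] by linarith
  show False
  proof (cases "ln (y v) - ln (x v) = R")
    case True
    show False by (rule core[OF xp yp yxe xye Rb v(1) True R0])
  next
    case False
    hence "ln (x v) - ln (y v) = R" using v(2) by linarith
    moreover have "\<And>u. u \<in> V \<Longrightarrow> \<bar>ln (x u) - ln (y u)\<bar> \<le> R" using Rb by (simp add: abs_minus_commute)
    ultimately show False using core[OF yp xp xye yxe] v(1) R0 by blast
  qed
qed

lemma F_cont:
  assumes "\<And>u. u \<in> V \<Longrightarrow> (\<lambda>m. X m u) \<longlonglongrightarrow> x u" and v: "v \<in> V"
  shows "(\<lambda>m. F (X m) v) \<longlonglongrightarrow> F x v"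
proof -
  have "(\<lambda>m. A (X m) v) \<longlonglongrightarrow> A x v"
    unfolding A_def using assms(1) Esub
    by (intro tendsto_intros) (auto simp: Ev_def)
  hence "(\<lambda>m. c * exp (- A (X m) v)) \<longlonglongrightarrow> c * exp (- A x v)"
    by (intro tendsto_intros)
  thus ?thesis using v by (simp add: F_eq)
qed

lemma exists_unique_fp: "\<exists>!x. x \<in> (\<Pi>\<^sub>E v\<in>V. {0..c}) \<and> F x = x"
proof -
  define L where "L m = ((\<lambda>x. F (F x)) ^^ m) (restrict (\<lambda>_. 0) V)" for m
  have L0: "L 0 = restrict (\<lambda>_. 0) V" unfolding L_def by simp
  have LS: "L (Suc m) = F (F (L m))" for m unfolding L_def by simp
  have Fnn: "\<And>x u. u \<in> V \<Longrightarrow> 0 \<le> F x u" using F_pos less_imp_le by blast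
  have Lnn: "\<And>u. u \<in> V \<Longrightarrow> 0 \<le> L m u" for m
    by (cases m) (auto simp: L0 LS Fnn)
  have Lc: "\<And>u. u \<in> V \<Longrightarrow> L m u \<le> c" for m
    by (cases m) (auto simp: L0 LS cpos less_imp_le intro!: F_le Fnn)
  have TT: "F (F x) u \<le> F (F y) u" if "\<And>u. u \<in> V \<Longrightarrow> 0 \<le> x u" "\<And>u. u \<in> V \<Longrightarrow> x u \<le> y u" "u \<in> V"
    for x y u
  proof -
    have "\<And>u. u \<in> V \<Longrightarrow> F y u \<le> F x u" using F_anti that by blast
    thus ?thesis using F_anti[of "F y" "F x" u] Fnn that(3) by blast
  qed
  have Linc: "\<And>u. u \<in> V \<Longrightarrow> L m u \<le> L (Suc m) u" for m
  proof (induction m)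
    case 0 thus ?case using Lnn by (simp add: L0)
  next
    case (Suc m)
    show ?case unfolding LS[of "Suc m"] unfolding LS[of m] using TT[OF Lnn Suc.IH] Suc.prems
      by (simp add: LS)
  qed
  have Lfix: "\<And>u. u \<in> V \<Longrightarrow> L m u \<le> z u" if z: "F z = z" for z m
  proof (induction m)
    case 0 thus ?case using Fnn[of _ z] z by (simp add: L0)
  next
    case (Suc m)
    have "F (F (L m)) u \<le> F (F z) u"
      by (rule TT[of "L m" z u]) (use Lnn Suc.IH Suc.prems in auto)
    thus ?case unfolding LS using z by simp
  qed
  define p where "p = restrict (\<lambda>v. SUP m. L m v) V"
  have lim: "(\<lambda>m. L m u) \<longlonglongrightarrow> p u" if u: "u \<in> V" for u
  proof -
    have "incseq (\<lambda>m. L m u)" using Linc[OF u] by (intro incseq_SucI) simp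
    moreover have "bdd_above (range (\<lambda>m. L m u))" using Lc[OF u] by (intro bdd_aboveI) auto
    ultimately show ?thesis unfolding p_def using u LIMSEQ_incseq_SUP by simp
  qed
  have Tp: "F (F p) = p"
  proof
    fix u show "F (F p) u = p u"
    proof (cases "u \<in> V")
      case True
      have "(\<lambda>m. L (Suc m) u) \<longlonglongrightarrow> p u" using lim[OF True] by (rule LIMSEQ_Suc)
      moreover have "(\<lambda>m. L (Suc m) u) \<longlonglongrightarrow> F (F p) u"
        unfolding LS by (intro F_cont True) (auto intro: F_cont lim)
      ultimately show ?thesis using LIMSEQ_unique by metis
    next
      case False thus ?thesis by (simp add: F_ext p_def)
    qed
  qed
  have Fp: "F p = p" using cycle[of p "F p"] Tp by metis
  have pB: "p \<in> (\<Pi>\<^sub>E v\<in>V. {0..c})"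
  proof -
    have "p u \<in> {0..c}" if u: "u \<in> V" for u
    proof -
      have pnn: "\<And>u. u \<in> V \<Longrightarrow> 0 \<le> p u" using Fnn Fp by metis
      have "F p u \<le> c" by (rule F_le) (use pnn u in auto)
      thus ?thesis using pnn[OF u] Fp by simp
    qed
    thus ?thesis unfolding p_def[symmetric] by (auto simp: p_def PiE_def extensional_def)
  qed
  show ?thesis
  proof (rule ex1I[of _ p])
    show "p \<in> (\<Pi>\<^sub>E v\<in>V. {0..c}) \<and> F p = p" using pB Fp by blast
  next
    fix z assume z: "z \<in> (\<Pi>\<^sub>E v\<in>V. {0..c}) \<and> F z = z"
    have pz: "\<And>u. u \<in> V \<Longrightarrow> p u \<le> z u"
    proof -
      fix u assume u: "u \<in> V"
      have "\<And>m. L m u \<le> z u" using Lfix z u by blast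
      thus "p u \<le> z u" using LIMSEQ_le_const2[OF lim[OF u]] by blast
    qed
    have pnn: "\<And>u. u \<in> V \<Longrightarrow> 0 \<le> p u" using Fnn Fp by metis
    have Fz: "F z = z" using z by blast
    have zp: "z u \<le> p u" if u: "u \<in> V" for u
    proof -
      have "F z u \<le> F p u" by (rule F_anti[OF pnn pz u])
      thus ?thesis using Fz Fp by simp
    qed
    show "z = p"
    proof
      fix u show "z u = p u"
        using pz zp z F_ext[of u p] F_ext[of u z] Fp by (cases "u \<in> V") (auto intro: antisym)
    qed
  qed
qed

end


theorem mainTheorem8:
  fixes k :: nat and c :: real and \<zeta> :: "nat \<Rightarrow> real"
    and V :: "nat \<Rightarrow> 'a set" and E :: "nat \<Rightarrow> 'a set set"
  assumes "k \<ge> 2" and "c > 0"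
    and "\<And>n. \<zeta> n \<in> {0<..1}"
    and "limsup (\<lambda>n. ereal (\<zeta> n * (real k - 1) * c ^ (k - 1))) < ereal (exp 1)"
    and "asymp_tree_like k V E"
  shows "\<forall>\<^sub>F n in sequentially. \<exists>!x. x \<in> (\<Pi>\<^sub>E v\<in>V n. {0..c}) \<and> Fmap (V n) (E n) c (\<zeta> n) x = x"
proof -
  have ev: "\<forall>\<^sub>F n in sequentially. \<zeta> n * (real k - 1) * c ^ (k - 1) < exp 1"
    using Limsup_lessD[OF assms(4)] by (auto elim!: eventually_mono)
  from assms(5) have unif: "\<And>n. uniform_hypergraph k (V n) (E n)"
    unfolding asymp_tree_like_def by blast
  show ?thesis
  proof (rule eventually_mono[OF ev])
    fix n assume g: "\<zeta> n * (real k - 1) * c ^ (k - 1) < exp 1"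
    define D where "D = max_degree (V n) (E n)"
    define w where "w = \<zeta> n / real D"
    have fin: "finite (V n)" and Esub: "\<And>e. e \<in> E n \<Longrightarrow> e \<subseteq> V n"
      and Ecard: "\<And>e. e \<in> E n \<Longrightarrow> card e = k"
      using unif[of n] unfolding uniform_hypergraph_def by auto
    have z: "0 < \<zeta> n" "\<zeta> n \<le> 1" using assms(3)[of n] by auto
    have degle: "card {e\<in>E n. v \<in> e} \<le> D" if v: "v \<in> V n" for v
    proof -
      have fs: "finite {hdeg (E n) S | S. S \<subseteq> V n \<and> card S = 1}"
      proof (rule finite_subset)
        show "{hdeg (E n) S | S. S \<subseteq> V n \<and> card S = 1} \<subseteq> hdeg (E n) ` Pow (V n)" by auto
        show "finite (hdeg (E n) ` Pow (V n))" using fin by simp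
      qed
      have "hdeg (E n) {v} \<in> {hdeg (E n) S | S. S \<subseteq> V n \<and> card S = 1}" using v by auto
      hence "hdeg (E n) {v} \<le> D" unfolding D_def max_degree_def Delta_l_def
        using fs by (intro Max_ge) auto
      thus ?thesis by (simp add: hdeg_def)
    qed
    have w0: "w \<ge> 0" unfolding w_def using z by simp
    have wcard: "w * real (card {e\<in>E n. v \<in> e}) \<le> \<zeta> n" if v: "v \<in> V n" for v
    proof (cases "D = 0")
      case True thus ?thesis unfolding w_def using z by simp
    next
      case False
      have "w * real (card {e\<in>E n. v \<in> e}) \<le> w * real D"
        using degle[OF v] w0 by (simp add: mult_left_mono)
      also have "\<dots> = \<zeta> n" unfolding w_def using False by simp
      finally show ?thesis .
    qed
    have k1: "real k - 1 \<ge> 0" using assms(1) by simp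
    have cp: "c ^ (k - 1) \<ge> 0" using assms(2) by simp
    interpret H: hg "V n" "E n" k c w "\<zeta> n * (real k - 1) * c ^ (k - 1)"
    proof
      show "finite (V n)" by (rule fin)
      show "\<And>e. e \<in> E n \<Longrightarrow> e \<subseteq> V n" by (rule Esub)
      show "\<And>e. e \<in> E n \<Longrightarrow> card e = k" by (rule Ecard)
      show "2 \<le> k" by (rule assms(1))
      show "0 < c" by (rule assms(2))
      show "0 \<le> w" by (rule w0)
      show "\<zeta> n * (real k - 1) * c ^ (k - 1) < exp 1" by (rule g)
      fix v assume v: "v \<in> V n"
      have "w * real (card {e\<in>E n. v \<in> e}) * (real k - 1) \<le> \<zeta> n * (real k - 1)"
        using wcard[OF v] k1 by (simp add: mult_right_mono)
      thus "w * real (card {e\<in>E n. v \<in> e}) * (real k - 1) * c ^ (k - 1) \<le> \<zeta> n * (real k - 1) * c ^ (k - 1)"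
        using cp by (simp add: mult_right_mono)
    qed
    have "Fmap (V n) (E n) c (\<zeta> n) = H.F"
      unfolding Fmap_def H.F_def H.A_def H.Ev_def by (rule ext) (simp add: w_def D_def)
    thus "\<exists>!x. x \<in> (\<Pi>\<^sub>E v\<in>V n. {0..c}) \<and> Fmap (V n) (E n) c (\<zeta> n) x = x"
      using H.exists_unique_fp by simp
  qed
qed

end
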